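(* Let $n\geq 0$. There does not exist a set $\Phi$ of modal formulas such that, for every transitive Kripke frame $\mathcal{F}$, every formula of $\Phi$ is valid in $\mathcal{F}$ if and only if $\mathcal{F}$ has circumference at most $n$.
   Context: Modal formulas are built from a denumerable set of propositional variables using $\top,\bot,\neg,\land,\lor,\to$ and unary modalities $\Diamond,\Box$. A (Kripke) frame is $\mathcal{F}=(W,R)$ with $R$ a binary relation on a set $W$; a model on it adds a valuation $V$ assigning subsets of $W$ to variables; truth sets are defined inductively with Boolean connectives interpreted set-theoretically, $\Diamond\varphi$ true at $x$ iff some $R$-successor of $x$ satisfies $\varphi$, and $\Box\varphi$ true at $x$ iff all $R$-successors of $x$ satisfy $\varphi$. A formula is valid in $\mathcal{F}$ if it is true at every point of every model on $\mathcal{F}$. A frame is transitive if $R$ is transitive. A cycle of length $m\geq 1$ is a sequence $x_1,\dots,x_m$ of distinct points with $x_1Rx_2R\cdots Rx_mRx_1$; the circumference of a frame is the supremum of the lengths of its cycles (0 if there are none). *)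

theory Defs
  imports Main "HOL-Library.Extended_Nat"
begin

datatype fm = Var nat | Top | Bot | Neg fm | And fm fm | Or fm fm | Imp fm fm
  | Dia fm | Box fm

definition kframe :: "'a set \<Rightarrow> ('a \<times> 'a) set \<Rightarrow> bool" where
  "kframe W R \<longleftrightarrow> R \<subseteq> W \<times> W"

fun sat :: "'a set \<Rightarrow> ('a \<times> 'a) set \<Rightarrow> (nat \<Rightarrow> 'a set) \<Rightarrow> 'a \<Rightarrow> fm \<Rightarrow> bool" where
  "sat W R V x (Var p) = (x \<in> V p)"
| "sat W R V x Top = True"
| "sat W R V x Bot = False"
| "sat W R V x (Neg a) = (\<not> sat W R V x a)"
| "sat W R V x (And a b) = (sat W R V x a \<and> sat W R V x b)"
| "sat W R V x (Or a b) = (sat W R V x a \<or> sat W R V x b)"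
| "sat W R V x (Imp a b) = (sat W R V x a \<longrightarrow> sat W R V x b)"
| "sat W R V x (Dia a) = (\<exists>y\<in>W. (x, y) \<in> R \<and> sat W R V y a)"
| "sat W R V x (Box a) = (\<forall>y\<in>W. (x, y) \<in> R \<longrightarrow> sat W R V y a)"

definition valid :: "'a set \<Rightarrow> ('a \<times> 'a) set \<Rightarrow> fm \<Rightarrow> bool" where
  "valid W R a \<longleftrightarrow> (\<forall>V. (\<forall>p. V p \<subseteq> W) \<longrightarrow> (\<forall>x\<in>W. sat W R V x a))"

definition is_cycle :: "('a \<times> 'a) set \<Rightarrow> 'a list \<Rightarrow> bool" where
  "is_cycle R xs \<longleftrightarrow> xs \<noteq> [] \<and> distinct xs
     \<and> (\<forall>i. Suc i < length xs \<longrightarrow> (xs ! i, xs ! Suc i) \<in> R)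
     \<and> (last xs, hd xs) \<in> R"

text \<open>Circumference: supremum of cycle lengths (0 if none), in extended naturals.\<close>
definition circumference :: "('a \<times> 'a) set \<Rightarrow> enat" where
  "circumference R = Sup {enat (length xs) | xs. is_cycle R xs}"

end

theory Submission
  imports Defs
begin

lemma pmorph:
  assumes maps: "\<And>x. x \<in> W1 \<Longrightarrow> f x \<in> W2"
    and forth: "\<And>x y. x \<in> W1 \<Longrightarrow> y \<in> W1 \<Longrightarrow> (x, y) \<in> R1 \<Longrightarrow> (f x, f y) \<in> R2"
    and bk: "\<And>x z. x \<in> W1 \<Longrightarrow> z \<in> W2 \<Longrightarrow> (f x, z) \<in> R2 \<Longrightarrow> \<exists>y\<in>W1. (x, y) \<in> R1 \<and> f y = z"
    and x: "x \<in> W1"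
  shows "sat W2 R2 V (f x) \<phi> = sat W1 R1 (\<lambda>p::nat. {x\<in>W1. f x \<in> V p}) x \<phi>"
  using x
proof (induction \<phi> arbitrary: x)
  case (Dia \<phi>)
  show ?case
  proof
    assume "sat W2 R2 V (f x) (Dia \<phi>)"
    then obtain z where z: "z \<in> W2" "(f x, z) \<in> R2" "sat W2 R2 V z \<phi>" by auto
    from bk[OF Dia.prems z(1,2)] obtain y where "y \<in> W1" "(x,y) \<in> R1" "f y = z" by blast
    then show "sat W1 R1 (\<lambda>p::nat. {x\<in>W1. f x \<in> V p}) x (Dia \<phi>)" using Dia.IH z(3) by auto
  next
    assume "sat W1 R1 (\<lambda>p::nat. {x\<in>W1. f x \<in> V p}) x (Dia \<phi>)"
    then obtain y where y: "y \<in> W1" "(x,y) \<in> R1" "sat W1 R1 (\<lambda>p::nat. {x\<in>W1. f x \<in> V p}) y \<phi>" by auto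
    then show "sat W2 R2 V (f x) (Dia \<phi>)" using Dia.IH[OF y(1)] maps forth[OF Dia.prems y(1,2)] by auto
  qed
next
  case (Box \<phi>)
  show ?case
  proof
    assume a: "sat W2 R2 V (f x) (Box \<phi>)"
    show "sat W1 R1 (\<lambda>p::nat. {x\<in>W1. f x \<in> V p}) x (Box \<phi>)"
    proof (simp, intro ballI impI)
      fix y assume "y \<in> W1" "(x,y) \<in> R1"
      then show "sat W1 R1 (\<lambda>p::nat. {x\<in>W1. f x \<in> V p}) y \<phi>"
        using a Box.IH maps forth[OF Box.prems] by auto
    qed
  next
    assume a: "sat W1 R1 (\<lambda>p::nat. {x\<in>W1. f x \<in> V p}) x (Box \<phi>)"
    show "sat W2 R2 V (f x) (Box \<phi>)"
    proof (simp, intro ballI impI)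
      fix z assume z: "z \<in> W2" "(f x, z) \<in> R2"
      from bk[OF Box.prems z] obtain y where "y \<in> W1" "(x,y) \<in> R1" "f y = z" by blast
      then show "sat W2 R2 V z \<phi>" using a Box.IH by auto
    qed
  qed
qed auto

lemma pmorph_valid:
  assumes maps: "\<And>x. x \<in> W1 \<Longrightarrow> f x \<in> W2"
    and forth: "\<And>x y. x \<in> W1 \<Longrightarrow> y \<in> W1 \<Longrightarrow> (x, y) \<in> R1 \<Longrightarrow> (f x, f y) \<in> R2"
    and bk: "\<And>x z. x \<in> W1 \<Longrightarrow> z \<in> W2 \<Longrightarrow> (f x, z) \<in> R2 \<Longrightarrow> \<exists>y\<in>W1. (x, y) \<in> R1 \<and> f y = z"
    and surj: "W2 \<subseteq> f ` W1"
    and v: "valid W1 R1 \<phi>"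
  shows "valid W2 R2 \<phi>"
  unfolding valid_def
proof (intro allI impI ballI)
  fix V :: "nat \<Rightarrow> _ set" and y assume "\<forall>p. V p \<subseteq> W2" "y \<in> W2"
  then obtain x where x: "x \<in> W1" "y = f x" using surj by auto
  have "sat W1 R1 (\<lambda>p::nat. {x\<in>W1. f x \<in> V p}) x \<phi>" using v x(1) unfolding valid_def by auto
  then show "sat W2 R2 V y \<phi>" using pmorph[OF maps forth bk x(1)] x(2) by auto
qed

theorem theorem2:
  fixes n :: nat
  assumes "infinite (UNIV :: 'w set)"
  shows "\<not> (\<exists>\<Phi> :: fm set. \<forall>(W :: 'w set) R. kframe W R \<and> trans R \<longrightarrow>
            ((\<forall>\<phi>\<in>\<Phi>. valid W R \<phi>) \<longleftrightarrow> circumference R \<le> enat n))"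
proof
  assume "\<exists>\<Phi> :: fm set. \<forall>(W :: 'w set) R. kframe W R \<and> trans R \<longrightarrow>
            ((\<forall>\<phi>\<in>\<Phi>. valid W R \<phi>) \<longleftrightarrow> circumference R \<le> enat n)"
  then obtain \<Phi> :: "fm set" where H: "\<And>(W :: 'w set) R. kframe W R \<Longrightarrow> trans R \<Longrightarrow>
            ((\<forall>\<phi>\<in>\<Phi>. valid W R \<phi>) \<longleftrightarrow> circumference R \<le> enat n)" by blast
  obtain g :: "nat \<Rightarrow> 'w" where g: "inj g"
    using assms infinite_countable_subset by blast
  define k where "k = inv g"
  have kg: "k (g i) = i" for i using g unfolding k_def by simp
  define W1 where "W1 = range g"
  define R1 where "R1 = {(g i, g j) | i j. i < j}"
  define W2 where "W2 = g ` {..n}"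
  define R2 where "R2 = W2 \<times> W2"
  define f where "f x = g (k x mod Suc n)" for x
  have R1k: "(a, b) \<in> R1 \<Longrightarrow> k a < k b" for a b unfolding R1_def using kg by auto
  have k1: "kframe W1 R1" unfolding kframe_def W1_def R1_def by auto
  have t1: "trans R1" unfolding trans_def R1_def using g by (auto dest: injD) (metis injD less_trans)
  have nocyc: "\<not> is_cycle R1 xs" for xs
  proof
    assume c: "is_cycle R1 xs"
    have "\<forall>i. i < length xs \<longrightarrow> k (xs ! 0) \<le> k (xs ! i)"
    proof (intro allI)
      fix i show "i < length xs \<longrightarrow> k (xs ! 0) \<le> k (xs ! i)"
      proof (induction i)
        case (Suc i)
        then show ?case using c R1k unfolding is_cycle_def
          by (metis Suc_lessD dual_order.trans less_imp_le)
      qed simp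
    qed
    moreover have "length xs - 1 < length xs" "xs \<noteq> []" using c unfolding is_cycle_def by auto
    ultimately have "k (hd xs) \<le> k (last xs)" by (simp add: hd_conv_nth last_conv_nth)
    moreover have "k (last xs) < k (hd xs)" using c R1k unfolding is_cycle_def by auto
    ultimately show False by simp
  qed
  have "circumference R1 = 0" unfolding circumference_def using nocyc
    by (simp add: bot_enat_def)
  then have v1: "\<forall>\<phi>\<in>\<Phi>. valid W1 R1 \<phi>" using H[OF k1 t1] by simp
  have k2: "kframe W2 R2" unfolding kframe_def R2_def by auto
  have t2: "trans R2" unfolding trans_def R2_def by auto
  have fm: "f x \<in> W2" if "x \<in> W1" for x unfolding f_def W2_def by auto
  have bk: "\<exists>y\<in>W1. (x, y) \<in> R1 \<and> f y = z" if xz: "x \<in> W1" "z \<in> W2" for x z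
  proof -
    obtain a where a: "x = g a" using xz(1) unfolding W1_def by auto
    obtain m where m: "m \<le> n" "z = g m" using xz(2) unfolding W2_def by auto
    define j where "j = Suc a * Suc n + m"
    have "a < j" unfolding j_def by (simp add: less_Suc_eq_le trans_le_add1)
    moreover have "j mod Suc n = m" unfolding j_def using m(1) by (metis le_imp_less_Suc mod_less mod_mult_self3)
    ultimately show ?thesis using a m unfolding W1_def R1_def f_def
      by (intro bexI[of _ "g j"]) (auto simp: kg)
  qed
  have surj: "W2 \<subseteq> f ` W1"
  proof
    fix z assume "z \<in> W2"
    then obtain m where m: "m \<le> n" "z = g m" unfolding W2_def by auto
    then have "f (g m) = z" unfolding f_def by (simp add: kg)
    then show "z \<in> f ` W1" unfolding W1_def by auto
  qed
  have fw: "(f x, f y) \<in> R2" if "x \<in> W1" "y \<in> W1" "(x, y) \<in> R1" for x y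
    using fm that unfolding R2_def by auto
  have v2: "\<forall>\<phi>\<in>\<Phi>. valid W2 R2 \<phi>"
  proof
    fix \<phi> assume "\<phi> \<in> \<Phi>"
    then have "valid W1 R1 \<phi>" using v1 by auto
    then show "valid W2 R2 \<phi>" using pmorph_valid[OF fm fw _ surj] bk by blast
  qed
  have cyc: "is_cycle R2 (map g [0..<Suc n])"
  proof -
    have s: "set (map g [0..<Suc n]) \<subseteq> W2" unfolding W2_def by auto
    have d: "distinct (map g [0..<Suc n])" using g by (simp add: distinct_map inj_on_subset del: upt_Suc) (meson inj_on_subset subset_UNIV)
    have "\<forall>x\<in>set (map g [0..<Suc n]). \<forall>y\<in>set (map g [0..<Suc n]). (x,y) \<in> R2"
      using s unfolding R2_def by blast
    moreover have "map g [0..<Suc n] \<noteq> []" by simp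
    ultimately show ?thesis unfolding is_cycle_def using d
      by (metis Suc_lessD last_in_set list.set_sel(1) nth_mem)
  qed
  have "enat (Suc n) \<le> circumference R2"
    unfolding circumference_def
    by (rule Sup_upper) (use cyc in \<open>auto intro!: exI[of _ "map g [0..<Suc n]"]\<close>)
  moreover have "circumference R2 \<le> enat n" using H[OF k2 t2] v2 by simp
  ultimately show False using order_trans[of "enat (Suc n)" "circumference R2" "enat n"] by simp
qed

end
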